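(* Let a pure two-mode Gaussian state have covariance matrix $$\boldsymbol\Sigma=\begin{bmatrix}a\,\mathbf S(r)&\mathbf R(\phi)\mathbf C\\ [\mathbf R(\phi)\mathbf C]^\top&b\,\mathbb{I}_2\end{bmatrix},$$ where $\mathbf S(r)=\mathrm{diag}(r,r^{-1})$ with $r>0$, $\mathbf R(\phi)=\begin{bmatrix}\cos\phi&-\sin\phi\\ \sin\phi&\cos\phi\end{bmatrix}$, $\mathbf C=\mathrm{diag}(c_+,c_-)$, and $a,b,c_\pm,\phi$ real. Then $a=b$.
   Context: Quadratures $\mathbf R=(q_S,p_S,q_I,p_I)^\top$ with $[R_i,R_j]=\mathrm{i}\Omega_{ij}$, $\boldsymbol\Omega=\mathbb{I}_2\otimes\begin{bmatrix}0&1\\-1&0\end{bmatrix}$; covariance $\Sigma_{ij}=\tfrac12\langle R_iR_j+R_jR_i\rangle-\langle R_i\rangle\langle R_j\rangle$, satisfying $\boldsymbol\Sigma+\mathrm{i}\boldsymbol\Omega/2\succeq0$. In this convention a two-mode Gaussian state is pure iff $\det\boldsymbol\Sigma=1/16$. *)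

theory Defs
  imports Complex_Main "Jordan_Normal_Form.Determinant"
begin

text \<open>Quadratures R = (q_S, p_S, q_I, p_I), indexed 0..3.\<close>

definition symp_form :: "real mat" where
  "symp_form = mat_of_rows_list 4
     [[0, 1, 0, 0], [-1, 0, 0, 0], [0, 0, 0, 1], [0, 0, -1, 0]]"

text \<open>Block covariance matrix [[a S(r), R(phi) C], [(R(phi) C)^T, b I]]
  with S(r) = diag(r, 1/r), R(phi) rotation, C = diag(cp, cm).\<close>
definition cov_mat :: "real \<Rightarrow> real \<Rightarrow> real \<Rightarrow> real \<Rightarrow> real \<Rightarrow> real \<Rightarrow> real mat" where
  "cov_mat a b r cp cm phi = mat_of_rows_list 4
     [[a * r, 0, cos phi * cp, - sin phi * cm],
      [0, a / r, sin phi * cp, cos phi * cm],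
      [cos phi * cp, sin phi * cp, b, 0],
      [- sin phi * cm, cos phi * cm, 0, b]]"

definition psd_cmat :: "nat \<Rightarrow> complex mat \<Rightarrow> bool" where
  "psd_cmat n M \<longleftrightarrow> M \<in> carrier_mat n n \<and>
     (\<forall>v :: nat \<Rightarrow> complex.
        (\<Sum>i<n. \<Sum>j<n. cnj (v i) * M $$ (i, j) * v j) \<in> \<real> \<and>
        0 \<le> Re (\<Sum>i<n. \<Sum>j<n. cnj (v i) * M $$ (i, j) * v j))"

definition bona_fide_cov :: "real mat \<Rightarrow> bool" where
  "bona_fide_cov S \<longleftrightarrow> S \<in> carrier_mat 4 4 \<and>
     psd_cmat 4 (map_mat complex_of_real S + (\<i> / 2) \<cdot>\<^sub>m map_mat complex_of_real symp_form)"

definition pure_gaussian_cov :: "real mat \<Rightarrow> bool" where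
  "pure_gaussian_cov S \<longleftrightarrow> bona_fide_cov S \<and> det S = 1 / 16"

end

theory Submission imports Defs begin

lemma det4:
  fixes A :: "'a::comm_ring_1 mat"
  assumes "A \<in> carrier_mat 4 4"
  shows "det A = A$$(0,0) * (A$$(1,1) * (A$$(2,2)*A$$(3,3) - A$$(2,3)*A$$(3,2)) - A$$(1,2) * (A$$(2,1)*A$$(3,3) - A$$(2,3)*A$$(3,1)) + A$$(1,3) * (A$$(2,1)*A$$(3,2) - A$$(2,2)*A$$(3,1)))
   - A$$(0,1) * (A$$(1,0) * (A$$(2,2)*A$$(3,3) - A$$(2,3)*A$$(3,2)) - A$$(1,2) * (A$$(2,0)*A$$(3,3) - A$$(2,3)*A$$(3,0)) + A$$(1,3) * (A$$(2,0)*A$$(3,2) - A$$(2,2)*A$$(3,0)))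
   + A$$(0,2) * (A$$(1,0) * (A$$(2,1)*A$$(3,3) - A$$(2,3)*A$$(3,1)) - A$$(1,1) * (A$$(2,0)*A$$(3,3) - A$$(2,3)*A$$(3,0)) + A$$(1,3) * (A$$(2,0)*A$$(3,1) - A$$(2,1)*A$$(3,0)))
   - A$$(0,3) * (A$$(1,0) * (A$$(2,1)*A$$(3,2) - A$$(2,2)*A$$(3,1)) - A$$(1,1) * (A$$(2,0)*A$$(3,2) - A$$(2,2)*A$$(3,0)) + A$$(1,2) * (A$$(2,0)*A$$(3,1) - A$$(2,1)*A$$(3,0)))"
proof -
  have d1: "det B = B$$(0,0)" if "B \<in> carrier_mat 1 1" for B :: "'a mat"
    using det_single[OF that] by simp
  have d2: "det B = B$$(0,0)*B$$(1,1) - B$$(0,1)*B$$(1,0)" if B: "B \<in> carrier_mat 2 2" for B :: "'a mat"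
    apply (subst laplace_expansion_row[OF B, of 0], simp)
    using B apply (simp add: lessThan_Suc numeral_2_eq_2 cofactor_def)
    apply (subst (1 2) d1)
    by (auto simp: mat_delete_def)
  have d3: "det B = B$$(0,0) * (B$$(1,1)*B$$(2,2) - B$$(1,2)*B$$(2,1)) - B$$(0,1) * (B$$(1,0)*B$$(2,2) - B$$(1,2)*B$$(2,0)) + B$$(0,2) * (B$$(1,0)*B$$(2,1) - B$$(1,1)*B$$(2,0))" if B: "B \<in> carrier_mat 3 3" for B :: "'a mat"
    apply (subst laplace_expansion_row[OF B, of 0], simp)
    using B apply (simp add: lessThan_Suc numeral_3_eq_3 cofactor_def)
    apply (subst (1 2 3) d2)
    by (auto simp: mat_delete_def algebra_simps eval_nat_numeral)
  show ?thesis
    apply (subst laplace_expansion_row[OF assms, of 0], simp)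
    using assms apply (simp add: lessThan_Suc eval_nat_numeral cofactor_def)
    apply (subst (1 2 3 4) d3)
    by (auto simp: mat_delete_def algebra_simps eval_nat_numeral)
qed

definition qfg :: "real \<Rightarrow> real \<Rightarrow> real \<Rightarrow> real \<Rightarrow> real \<Rightarrow> real \<Rightarrow> real \<Rightarrow> (nat \<Rightarrow> real) \<Rightarrow> (nat \<Rightarrow> real) \<Rightarrow> real" where
  "qfg a0 a1 b c00 c01 c10 c11 X Y =
     (a0 * (X 0)^2 + a1 * (X 1)^2 + b * (X 2)^2 + b * (X 3)^2 + 2 * (X 0 * (c00 * X 2 + c01 * X 3) + X 1 * (c10 * X 2 + c11 * X 3)))
   + (a0 * (Y 0)^2 + a1 * (Y 1)^2 + b * (Y 2)^2 + b * (Y 3)^2 + 2 * (Y 0 * (c00 * Y 2 + c01 * Y 3) + Y 1 * (c10 * Y 2 + c11 * Y 3)))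
   - (X 0 * Y 1 - X 1 * Y 0 + X 2 * Y 3 - X 3 * Y 2)"

lemma re_triple: "Re (cnj (Complex x y) * Complex s w * Complex x' y') = s * (x*x' + y*y') + w * (y*x' - x*y')"
  by (simp add: algebra_simps)

definition covL :: "real \<Rightarrow> real \<Rightarrow> real \<Rightarrow> real \<Rightarrow> real \<Rightarrow> real \<Rightarrow> real list list" where
  "covL a b r cp cm phi = [[a * r, 0, cos phi * cp, - sin phi * cm],
      [0, a / r, sin phi * cp, cos phi * cm],
      [cos phi * cp, sin phi * cp, b, 0],
      [- sin phi * cm, cos phi * cm, 0, b]]"

definition sympL :: "real list list" where
  "sympL = [[0, 1, 0, 0], [-1, 0, 0, 0], [0, 0, 0, 1], [0, 0, -1, 0]]"

lemma H_entry:
  assumes "i < 4" "j < 4"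
  shows "(map_mat complex_of_real (cov_mat a b r cp cm phi) + (\<i> / 2) \<cdot>\<^sub>m map_mat complex_of_real symp_form) $$ (i,j)
     = Complex (covL a b r cp cm phi ! i ! j) (sympL ! i ! j / 2)"
  using assms unfolding cov_mat_def symp_form_def mat_of_rows_list_def covL_def[symmetric] sympL_def[symmetric]
  by (simp add: complex_eq_iff covL_def sympL_def)

lemma sum_4: "(\<Sum>i<(4::nat). f i) = f 0 + f 1 + f 2 + f 3"
  by (simp add: numeral_eq_Suc lessThan_Suc add_ac)

lemma qf_nonneg:
  assumes "bona_fide_cov (cov_mat a b r cp cm phi)"
  shows "0 \<le> qfg (a*r) (a/r) b (cos phi * cp) (- sin phi * cm) (sin phi * cp) (cos phi * cm) X Y"
proof -
  let ?H = "map_mat complex_of_real (cov_mat a b r cp cm phi) + (\<i> / 2) \<cdot>\<^sub>m map_mat complex_of_real symp_form"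
  have "psd_cmat 4 ?H" using assms unfolding bona_fide_cov_def by blast
  then have h: "\<forall>v. 0 \<le> Re (\<Sum>i<4. \<Sum>j<4. cnj (v i) * ?H $$ (i, j) * v j)"
    unfolding psd_cmat_def by blast
  have "0 \<le> Re (\<Sum>i<4. \<Sum>j<4. cnj (Complex (X i) (Y i)) * ?H $$ (i, j) * Complex (X j) (Y j))"
    by (rule h[rule_format])
  also have "Re (\<Sum>i<4. \<Sum>j<4. cnj (Complex (X i) (Y i)) * ?H $$ (i, j) * Complex (X j) (Y j))
     = (\<Sum>i<4. \<Sum>j<4. covL a b r cp cm phi ! i ! j * (X i * X j + Y i * Y j) + (sympL ! i ! j / 2) * (Y i * X j - X i * Y j))"
    unfolding Re_sum
    apply (rule sum.cong[OF refl])+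
    by (simp only: H_entry lessThan_iff re_triple)
  also have "\<dots> = qfg (a*r) (a/r) b (cos phi * cp) (- sin phi * cm) (sin phi * cp) (cos phi * cm) X Y"
    apply (simp only: sum_4)
    apply (simp add: covL_def sympL_def qfg_def power2_eq_square)
    by (simp add: algebra_simps add_divide_distrib diff_divide_distrib)
  finally show ?thesis .
qed

lemma detblk:
  fixes a0 a1 b c00 c01 c10 c11 :: real
  shows "det (mat_of_rows_list 4 [[a0,0,c00,c01],[0,a1,c10,c11],[c00,c10,b,0],[c01,c11,0,b]])
    = b^2*a0*a1 - b*(a1*(c00^2+c01^2) + a0*(c10^2+c11^2)) + (c00*c11 - c01*c10)^2"
proof -
  have c: "mat_of_rows_list 4 [[a0,0,c00,c01],[0,a1,c10,c11],[c00,c10,b,0],[c01,c11,0,b]] \<in> carrier_mat 4 4"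
    by (rule carrier_matI) (simp_all add: mat_of_rows_list_def)
  show ?thesis
    apply (subst det4[OF c])
    apply (simp add: mat_of_rows_list_def)
    by (simp add: algebra_simps power2_eq_square)
qed

lemma det_cov:
  assumes "r > 0"
  shows "det (cov_mat a b r cp cm phi) = a^2*b^2 - a*b*(((cos phi)^2*cp^2 + (sin phi)^2*cm^2)/r + r*((sin phi)^2*cp^2 + (cos phi)^2*cm^2)) + (cp*cm)^2"
proof -
  have s: "(sin phi)^2 + (cos phi)^2 = 1" by simp
  have e1: "(cos phi * cp) * (cos phi * cm) - (- sin phi * cm) * (sin phi * cp) = cp * cm"
  proof -
    have "(cos phi * cp) * (cos phi * cm) - (- sin phi * cm) * (sin phi * cp) = cp*cm*(cos phi)^2 + cp*cm*(sin phi)^2"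
      by (simp add: algebra_simps power2_eq_square)
    also have "\<dots> = cp * cm" by (simp add: sin_squared_eq algebra_simps)
    finally show ?thesis .
  qed
  have e2: "b^2 * (a * r) * (a / r) = a^2 * b^2" using assms by (simp add: power2_eq_square)
  show ?thesis
    unfolding cov_mat_def detblk e1 e2
    using assms by (simp add: algebra_simps power2_eq_square power_mult_distrib add_divide_distrib)
qed

lemma quad_disc:
  fixes A B C :: real
  assumes h: "\<And>t. 0 \<le> A * t^2 + 2 * B * t + C" and A0: "A \<ge> 0"
  shows "B^2 \<le> A * C"
proof (cases "A = 0")
  case True
  show ?thesis
  proof (cases "B = 0")
    case True then show ?thesis using \<open>A = 0\<close> by simp
  next
    case False
    have "0 \<le> 2 * B * (-(C+1)/(2*B)) + C" using h[of "-(C+1)/(2*B)"] True by simp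
    then show ?thesis using False by (simp add: field_simps)
  qed
next
  case False
  then have A0: "A > 0" using A0 by simp
  have "0 \<le> A * (-B/A)^2 + 2 * B * (-B/A) + C" by (rule h)
  then have "0 \<le> (A * C - B^2) / A" using A0 by (simp add: field_simps power2_eq_square)
  then show ?thesis using A0 by (simp add: divide_nonneg_pos zero_le_divide_iff)
qed

lemma tv_identity:
  fixes a0 a1 b c00 c01 c10 c11 p0 p1 q0 q1 :: real
  defines "x \<equiv> b^2 - 1/4"
  defines "g0 \<equiv> c00 * p0 + c10 * p1" and "g1 \<equiv> c01 * p0 + c11 * p1"
  defines "h0 \<equiv> c00 * q0 + c10 * q1" and "h1 \<equiv> c01 * q0 + c11 * q1"
  defines "M00 \<equiv> c00^2 + c01^2" and "M01 \<equiv> c00*c10 + c01*c11" and "M11 \<equiv> c10^2 + c11^2"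
  defines "P00 \<equiv> x * a0 - b * M00" and "P01 \<equiv> - b * M01" and "P11 \<equiv> x * a1 - b * M11"
  defines "\<kappa> \<equiv> x + (c00*c11 - c01*c10)"
  shows "qfg a0 a1 b c00 c01 c10 c11
     ((!) [x*p0, x*p1, -(b*g0 + h1/2), -(b*g1 - h0/2)])
     ((!) [x*q0, x*q1, -(b*h0 - g1/2), -(b*h1 + g0/2)])
   = x * (P00*p0^2 + 2*P01*p0*p1 + P11*p1^2 + P00*q0^2 + 2*P01*q0*q1 + P11*q1^2 - \<kappa> * (p0*q1 - p1*q0))"
  unfolding qfg_def assms
  by (simp add: field_simps power2_eq_square)

lemma tv_edge:
  fixes a0 a1 b c00 c01 c10 c11 p0 p1 q0 q1 s :: real
  shows "qfg a0 a1 b c00 c01 c10 c11 ((!) [s*p0, s*p1, 1, 0]) ((!) [s*q0, s*q1, 0, 1])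
   = (a0*(p0^2+q0^2) + a1*(p1^2+q1^2) - (p0*q1 - p1*q0)) * s^2 + 2 * (p0*c00 + p1*c10 + q0*c01 + q1*c11) * s + (2*b - 1)"
  unfolding qfg_def
  by (simp add: algebra_simps power2_eq_square)

lemma final_arith:
  fixes a b r M00 M01 M11 cc :: real
  defines "x \<equiv> b^2 - 1/4"
  defines "P00 \<equiv> x * (a*r) - b * M00" and "P01 \<equiv> - b * M01" and "P11 \<equiv> x * (a/r) - b * M11"
  assumes r: "r > 0" and a: "a \<ge> 0" and b: "b > 1/2"
    and M00: "M00 \<ge> 0" and M11: "M11 \<ge> 0" and lag: "M00*M11 - M01^2 = cc^2"
    and dt: "a^2*b^2 - a*b*(M00/r + r*M11) + cc^2 = 1/16"
    and P00: "P00 \<ge> 0" and P11: "P11 \<ge> 0" and dP: "P00*P11 - P01^2 \<ge> (x + cc)^2/4"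
  shows "a = b"
proof -
  define n where "n = M00/r + r*M11"
  have "(1/2::real)^2 < b^2" using b by (intro power_strict_mono) simp_all
  then have x: "x > 0" unfolding x_def by (simp add: power2_eq_square)
  have b0: "b > 0" using b by simp
  have idP: "P00*P11 - P01^2 = x^2*a^2 - x*a*b*n + b^2*cc^2"
  proof -
    have "P00*P11 - P01^2 = x^2*a^2*(r*(1/r)) - x*a*b*n + b^2*(M00*M11 - M01^2)"
      unfolding P00_def P11_def P01_def n_def using r by (simp add: field_simps power2_eq_square)
    then show ?thesis using r lag by simp
  qed
  have Delta: "a^2 + b^2 + 2*cc \<le> 1/2"
  proof -
    have "x^2*a^2 - x*a*b*n + b^2*cc^2 \<ge> (x + cc)^2/4" using dP idP by simp
    moreover have "b^2*cc^2 = x*cc^2 + cc^2/4" unfolding x_def by (simp add: algebra_simps)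
    moreover have "(x+cc)^2/4 = x^2/4 + x*cc/2 + cc^2/4" by (simp add: power2_eq_square algebra_simps add_divide_distrib)
    moreover have "x * (x*a^2 - a*b*n + cc^2 - x/4 - cc/2) = x^2*a^2 - x*a*b*n + x*cc^2 - x^2/4 - x*cc/2"
      by (simp add: power2_eq_square algebra_simps)
    ultimately have "x * (x*a^2 - a*b*n + cc^2 - x/4 - cc/2) \<ge> 0" by linarith
    then have "x*a^2 - a*b*n + cc^2 - x/4 - cc/2 \<ge> 0" using x by (simp add: zero_le_mult_iff)
    moreover have "x*a^2 - a*b*n + cc^2 = 1/16 - a^2/4" using dt unfolding x_def n_def by (simp add: algebra_simps)
    moreover have "x*a^2 = a^2*b^2 - a^2/4" by (simp add: x_def algebra_simps)
    moreover have "x = b^2 - 1/4" by (simp add: x_def)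
    ultimately show ?thesis by linarith
  qed
  have P01sq: "P01^2 \<le> P00*P11"
  proof -
    have "(x+cc)^2/4 \<ge> 0" by simp
    then show ?thesis using dP by linarith
  qed
  have M01sq: "M01^2 \<le> M00*M11" using lag zero_le_power2[of cc] by linarith
  have tr: "P00*M11 + P11*M00 - 2*P01*M01 \<ge> 0"
  proof -
    have "(P01*M01)^2 \<le> (P00*P11)*(M00*M11)" unfolding power_mult_distrib
      using P01sq M01sq by (simp add: mult_mono P00 P11 M00 M11 zero_le_mult_iff)
    also have "(P00*P11)*(M00*M11) = (P00*M11)*(P11*M00)" by (simp add: algebra_simps)
    also have "\<dots> \<le> ((P00*M11 + P11*M00)/2)^2"
    proof -
      have "((P00*M11 + P11*M00)/2)^2 - (P00*M11)*(P11*M00) = ((P00*M11 - P11*M00)/2)^2"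
        by (simp add: power2_eq_square field_simps)
      moreover have "((P00*M11 - P11*M00)/2)^2 \<ge> 0" by simp
      ultimately show ?thesis by linarith
    qed
    finally have h1: "(P01*M01)^2 \<le> ((P00*M11 + P11*M00)/2)^2" .
    have h2: "(P00*M11 + P11*M00)/2 \<ge> 0" using P00 P11 M00 M11 by simp
    have "P01*M01 \<le> (P00*M11 + P11*M00)/2" using power2_le_imp_le[OF h1 h2] .
    then show ?thesis by simp
  qed
  have uw: "(a*r)*(a/r) = a^2" using r by (simp add: power2_eq_square)
  have xa2: "(x*a)^2 \<ge> (b*cc)^2"
  proof -
    have key: "(x*a)^2 = (P00*P11 - P01^2) + b^2*cc^2 + b*(P00*M11 + P11*M00 - 2*P01*M01)"
    proof -
      define u where "u = a*r"
      define w where "w = a/r"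
      have "(x*a)^2 = x*x*(u*w)" unfolding u_def w_def uw by (simp add: power2_eq_square)
      also have "\<dots> = ((x*u - b*M00)*(x*w - b*M11) - (-b*M01)^2) + b^2*(M00*M11 - M01^2) + b*((x*u - b*M00)*M11 + (x*w - b*M11)*M00 - 2*(-b*M01)*M01)"
        by (simp add: algebra_simps power2_eq_square)
      finally show ?thesis unfolding P00_def P11_def P01_def u_def w_def lag .
    qed
    have "(x+cc)^2/4 \<ge> 0" by simp
    then have "P00*P11 - P01^2 \<ge> 0" using dP by linarith
    moreover have "b*(P00*M11 + P11*M00 - 2*P01*M01) \<ge> 0" using tr b0 by simp
    ultimately show ?thesis unfolding key by (simp add: power_mult_distrib)
  qed
  have xa: "x*a \<ge> b*\<bar>cc\<bar>"
  proof -
    have h1: "(b*\<bar>cc\<bar>)^2 \<le> (x*a)^2" using xa2 by (simp add: power_mult_distrib)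
    have h2: "x*a \<ge> 0" using x a by simp
    show ?thesis using power2_le_imp_le[OF h1 h2] .
  qed
  have abc: "a*b \<ge> \<bar>cc\<bar>"
  proof -
    have "b*(a*b - \<bar>cc\<bar>) \<ge> a/4" using xa unfolding x_def by (simp add: algebra_simps power2_eq_square)
    then have "b*(a*b - \<bar>cc\<bar>) \<ge> 0" using a by linarith
    then show ?thesis using b0 by (simp add: zero_le_mult_iff)
  qed
  have nn: "n \<ge> 2*\<bar>cc\<bar>"
  proof -
    have e: "n^2 - (M00/r - r*M11)^2 = 4*((M00/r)*(r*M11))" unfolding n_def by (simp add: power2_eq_square algebra_simps)
    have e2: "(M00/r)*(r*M11) = M00*M11" using r by simp
    have "(M00/r - r*M11)^2 \<ge> 0" by simp
    moreover have "(2*\<bar>cc\<bar>)^2 = 4*cc^2" by (simp add: power_mult_distrib)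
    moreover have "M01^2 \<ge> 0" by simp
    ultimately have h1: "(2*\<bar>cc\<bar>)^2 \<le> n^2" using e[unfolded e2] lag by linarith
    have h2: "n \<ge> 0" unfolding n_def using r M00 M11 by simp
    show ?thesis using power2_le_imp_le[OF h1 h2] .
  qed
  have sq: "(a*b - \<bar>cc\<bar>)^2 \<ge> 1/16"
  proof -
    have "a*b*n \<ge> a*b*(2*\<bar>cc\<bar>)" using nn a b0 by (simp add: mult_left_mono)
    then have "1/16 \<le> a^2*b^2 - a*b*(2*\<bar>cc\<bar>) + cc^2" using dt unfolding n_def by linarith
    also have "\<dots> = (a*b - \<bar>cc\<bar>)^2" by (simp add: power2_eq_square algebra_simps)
    finally show ?thesis .
  qed
  have ge: "a*b - \<bar>cc\<bar> \<ge> 1/4"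
  proof -
    have h1: "(1/4)^2 \<le> (a*b - \<bar>cc\<bar>)^2" using sq by (simp add: power2_eq_square)
    have h2: "a*b - \<bar>cc\<bar> \<ge> 0" using abc by simp
    show ?thesis using power2_le_imp_le[OF h1 h2] .
  qed
  have "(a - b)^2 \<le> 0"
  proof -
    have "(a-b)^2 = a^2 + b^2 - 2*(a*b)" by (simp add: power2_eq_square algebra_simps)
    moreover have "- cc \<le> \<bar>cc\<bar>" by simp
    ultimately show ?thesis using Delta ge by linarith
  qed
  then show ?thesis by simp
qed


theorem lemma8:
  fixes a b r cp cm phi :: real
  assumes "r > 0"
    and "pure_gaussian_cov (cov_mat a b r cp cm phi)"
  shows "a = b"
proof -
  have r: "r > 0" by (rule assms(1))
  have bf: "bona_fide_cov (cov_mat a b r cp cm phi)" and dt: "det (cov_mat a b r cp cm phi) = 1/16"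
    using assms(2) unfolding pure_gaussian_cov_def by auto
  define c00 where "c00 = cos phi * cp"
  define c01 where "c01 = - sin phi * cm"
  define c10 where "c10 = sin phi * cp"
  define c11 where "c11 = cos phi * cm"
  have Q: "\<And>X Y. 0 \<le> qfg (a*r) (a/r) b c00 c01 c10 c11 X Y"
    unfolding c00_def c01_def c10_def c11_def by (rule qf_nonneg[OF bf])
  define M00 where "M00 = c00^2 + c01^2"
  define M01 where "M01 = c00*c10 + c01*c11"
  define M11 where "M11 = c10^2 + c11^2"
  define cc where "cc = c00*c11 - c01*c10"
  have cce: "cc = cp * cm"
  proof -
    have "cc = cp*cm*(cos phi)^2 + cp*cm*(sin phi)^2"
      unfolding cc_def c00_def c01_def c10_def c11_def by (simp add: algebra_simps power2_eq_square)
    also have "\<dots> = cp * cm" by (simp add: sin_squared_eq algebra_simps)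
    finally show ?thesis .
  qed
  have M00e: "M00 = (cos phi)^2*cp^2 + (sin phi)^2*cm^2"
    unfolding M00_def c00_def c01_def by (simp add: power_mult_distrib)
  have M11e: "M11 = (sin phi)^2*cp^2 + (cos phi)^2*cm^2"
    unfolding M11_def c10_def c11_def by (simp add: power_mult_distrib)
  have lag: "M00*M11 - M01^2 = cc^2"
    unfolding M00_def M11_def M01_def cc_def by (simp add: algebra_simps power2_eq_square)
  have dt': "a^2*b^2 - a*b*(M00/r + r*M11) + cc^2 = 1/16"
    using det_cov[OF r, of a b cp cm phi] dt unfolding M00e M11e cce by simp
  have M00ge: "M00 \<ge> 0" unfolding M00_def by simp
  have M11ge: "M11 \<ge> 0" unfolding M11_def by simp
  have "0 \<le> qfg (a*r) (a/r) b c00 c01 c10 c11 ((!) [1,0,0,0]) ((!) [0,0,0,0])" by (rule Q)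
  then have "0 \<le> a * r" by (simp add: qfg_def)
  then have a0: "a \<ge> 0" using r by (simp add: zero_le_mult_iff)
  have "0 \<le> qfg (a*r) (a/r) b c00 c01 c10 c11 ((!) [0,0,1,0]) ((!) [0,0,0,1])" by (rule Q)
  then have bh: "b \<ge> 1/2" by (simp add: qfg_def)
  show ?thesis
  proof (cases "b = 1/2")
    case True
    have L: "pa*c00 + pb*c10 + qa*c01 + qb*c11 = 0"
      if K: "a*r*(pa^2+qa^2) + a/r*(pb^2+qb^2) - (pa*qb - pb*qa) \<ge> 0" for pa pb qa qb
    proof -
      have "0 \<le> (a*r*(pa^2+qa^2) + a/r*(pb^2+qb^2) - (pa*qb - pb*qa)) * s^2 + 2 * (pa*c00 + pb*c10 + qa*c01 + qb*c11) * s + 0" for s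
      proof -
        have "0 \<le> qfg (a*r) (a/r) b c00 c01 c10 c11 ((!) [s*pa, s*pb, 1, 0]) ((!) [s*qa, s*qb, 0, 1])" by (rule Q)
        then show ?thesis unfolding tv_edge using True by simp
      qed
      from quad_disc[OF this K] have "(pa*c00 + pb*c10 + qa*c01 + qb*c11)^2 \<le> 0" by simp
      then show ?thesis by simp
    qed
    have ar: "a*r \<ge> 0" "a/r \<ge> 0" using a0 r by simp_all
    have z1: "c00 = 0" using L[where pa=1 and pb=0 and qa=0 and qb=0] ar by simp
    have z2: "c10 = 0" using L[where pa=0 and pb=1 and qa=0 and qb=0] ar by simp
    have z3: "c01 = 0" using L[where pa=0 and pb=0 and qa=1 and qb=0] ar by simp
    have z4: "c11 = 0" using L[where pa=0 and pb=0 and qa=0 and qb=1] ar by simp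
    have "a^2 * (1/4) = 1/16" using dt' True unfolding M00_def M11_def cc_def z1 z2 z3 z4 by (simp add: power2_eq_square)
    then have "a^2 = (1/2)^2" by (simp add: power2_eq_square)
    then have "a = 1/2" using a0 by (simp add: power2_eq_iff)
    then show ?thesis using True by simp
  next
    case False
    then have bgt: "b > 1/2" using bh by simp
    define x where "x = b^2 - 1/4"
    have "(1/2::real)^2 < b^2" using bgt by (intro power_strict_mono) simp_all
    then have x: "x > 0" unfolding x_def by (simp add: power2_eq_square)
    define P00 where "P00 = x * (a*r) - b * M00"
    define P01 where "P01 = - b * M01"
    define P11 where "P11 = x * (a/r) - b * M11"
    define \<kappa> where "\<kappa> = x + cc"
    have T: "0 \<le> P00*p0^2 + 2*P01*p0*p1 + P11*p1^2 + P00*q0^2 + 2*P01*q0*q1 + P11*q1^2 - \<kappa> * (p0*q1 - p1*q0)"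
      for p0 p1 q0 q1
    proof -
      have "0 \<le> qfg (a*r) (a/r) b c00 c01 c10 c11
         ((!) [(b^2 - 1/4)*p0, (b^2 - 1/4)*p1, -(b*(c00 * p0 + c10 * p1) + (c01 * q0 + c11 * q1)/2), -(b*(c01 * p0 + c11 * p1) - (c00 * q0 + c10 * q1)/2)])
         ((!) [(b^2 - 1/4)*q0, (b^2 - 1/4)*q1, -(b*(c00 * q0 + c10 * q1) - (c01 * p0 + c11 * p1)/2), -(b*(c01 * q0 + c11 * q1) + (c00 * p0 + c10 * p1)/2)])"
        by (rule Q)
      also have "\<dots> = x * (P00*p0^2 + 2*P01*p0*p1 + P11*p1^2 + P00*q0^2 + 2*P01*q0*q1 + P11*q1^2 - \<kappa> * (p0*q1 - p1*q0))"
        unfolding x_def P00_def P01_def P11_def \<kappa>_def M00_def M01_def M11_def cc_def by (rule tv_identity)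
      finally show ?thesis using x by (simp add: zero_le_mult_iff)
    qed
    have P00ge: "P00 \<ge> 0" using T[of 1 0 0 0] by simp
    have P11ge: "P11 \<ge> 0" using T[of 0 1 0 0] by simp
    define \<beta> where "\<beta> = P01^2 + \<kappa>^2/4"
    have "0 \<le> (P00*\<beta>) * t^2 + 2 * \<beta> * t + P11" for t
    proof -
      have "0 \<le> P00*(t*P01)^2 + 2*P01*(t*P01)*1 + P11*1^2 + P00*(t*\<kappa>/2)^2 + 2*P01*(t*\<kappa>/2)*0 + P11*0^2 - \<kappa> * ((t*P01)*0 - 1*(t*\<kappa>/2))"
        by (rule T)
      also have "\<dots> = (P00*\<beta>) * t^2 + 2 * \<beta> * t + P11"
        unfolding \<beta>_def by (simp add: power2_eq_square algebra_simps)
      finally show ?thesis .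
    qed
    from quad_disc[OF this] have bb: "\<beta>^2 \<le> P00*\<beta>*P11" using P00ge by (simp add: \<beta>_def)
    have bge: "\<beta> \<ge> 0" unfolding \<beta>_def by simp
    have "\<beta> \<le> P00*P11"
    proof (cases "\<beta> = 0")
      case True then show ?thesis using P00ge P11ge by simp
    next
      case False
      then have "\<beta> > 0" using bge by simp
      moreover have "\<beta> * \<beta> \<le> \<beta> * (P00*P11)" using bb by (simp add: power2_eq_square algebra_simps)
      ultimately show ?thesis by simp
    qed
    then have dP: "P00*P11 - P01^2 \<ge> (x + cc)^2/4" unfolding \<beta>_def \<kappa>_def by simp
    show ?thesis
      using final_arith[of r a b M00 M11 M01 cc] r a0 bgt M00ge M11ge lag dt' P00ge P11ge dP
      unfolding x_def P00_def P01_def P11_def by blast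
  qed
qed

end
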